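(* Consider the setting in the context with $\mathbf{Q}_\Delta$ given by the LU trick, and assume $\mathbf{A}$ is invertible. For $k\in\mathbb{N}$ let $\mathbf{T}_S(\mu,k)=\big(\mathbf{I}_{LMN}-\hat{\mathbf{P}}^{-1}\mathbf{C}\big)^k$ be the iteration matrix of $k$ smoother iterations. Then the smoother converges if $\mu$ is large enough and at least $M$ iterations are performed: for every $k\ge M$ there exist a fixed value $\mu^*_{S,\infty}>0$ and a constant $c>0$ independent of $\mu$ (but depending on $k$) such that for all $\mu>\mu^*_{S,\infty}$, $$\rho\big(\mathbf{T}_S(\mu,k)\big)\le \frac{c}{\mu}.$$
   Context: Fix positive integers $L$ (time steps), $M$ (collocation nodes), $N$ (spatial degrees of freedom). Let $0<\tau_1<\dots<\tau_M=1$ be the (right) Gauss–Radau nodes on $[0,1]$, $\ell_j$ the Lagrange basis polynomials, $\mathbf{Q}=(q_{m,j})\in\mathbb{R}^{M\times M}$ with $q_{m,j}=\int_0^{\tau_m}\ell_j(s)\,ds$. LU trick: write $\mathbf{Q}^T=\mathbf{L}_Q\mathbf{U}_Q$ with $\mathbf{L}_Q$ unit lower triangular and $\mathbf{U}_Q$ upper triangular, and set $\mathbf{Q}_\Delta=\mathbf{U}_Q^T$. Let $\mathbf{A}\in\mathbb{C}^{N\times N}$ and $\mu>0$ (CFL number). Let $\mathbf{N}_M\in\mathbb{R}^{M\times M}$ have ones in its last column and zeros elsewhere, $\mathbf{H}=\mathbf{N}_M\otimes\mathbf{I}_N$, $\mathbf{E}\in\mathbb{R}^{L\times L}$ with ones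 on the first subdiagonal and zeros elsewhere. $\mathbf{C}=\mathbf{I}_{LMN}-\mu\,\mathbf{I}_L\otimes\mathbf{Q}\otimes\mathbf{A}-\mathbf{E}\otimes\mathbf{H}$, $\hat{\mathbf{P}}=\mathbf{I}_{LMN}-\mu\,\mathbf{I}_L\otimes\mathbf{Q}_\Delta\otimes\mathbf{A}$ (assumed invertible). $\rho$ denotes the spectral radius. *)

theory Defs
  imports "HOL-Analysis.Analysis" "HOL-Computational_Algebra.Polynomial"
    "Jordan_Normal_Form.Spectral_Radius" "Jordan_Normal_Form.Gauss_Jordan_Elimination"
begin

(* Nodes are indexed 0..M-1, i.e. tau 0 = tau_1, ..., tau (M-1) = tau_M. *)

definition lagrange_basis :: "(nat \<Rightarrow> real) \<Rightarrow> nat \<Rightarrow> nat \<Rightarrow> real \<Rightarrow> real" where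
  "lagrange_basis tau M j s = (\<Prod>i\<in>{0..<M} - {j}. (s - tau i) / (tau j - tau i))"

definition right_radau_nodes :: "nat \<Rightarrow> (nat \<Rightarrow> real) \<Rightarrow> bool" where
  "right_radau_nodes M tau \<longleftrightarrow>
     0 < tau 0 \<and> (\<forall>i j. i < j \<and> j < M \<longrightarrow> tau i < tau j) \<and> tau (M - 1) = 1 \<and>
     (\<forall>p :: real poly. degree p \<le> 2 * M - 2 \<longrightarrow>
        integral {0..1} (poly p) =
        (\<Sum>j<M. integral {0..1} (lagrange_basis tau M j) * poly p (tau j)))"

definition coll_Q :: "(nat \<Rightarrow> real) \<Rightarrow> nat \<Rightarrow> real mat" where
  "coll_Q tau M = mat M M (\<lambda>(m, j). integral {0..tau m} (lagrange_basis tau M j))"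

definition kron :: "'a :: times mat \<Rightarrow> 'a mat \<Rightarrow> 'a mat" where
  "kron A B = mat (dim_row A * dim_row B) (dim_col A * dim_col B)
     (\<lambda>(i, j). A $$ (i div dim_row B, j div dim_col B) * B $$ (i mod dim_row B, j mod dim_col B))"

definition unit_lower_triangular :: "'a :: {zero,one} mat \<Rightarrow> bool" where
  "unit_lower_triangular A \<longleftrightarrow>
     (\<forall>i j. i < dim_row A \<and> j < dim_col A \<and> i < j \<longrightarrow> A $$ (i, j) = 0) \<and>
     (\<forall>i. i < dim_row A \<and> i < dim_col A \<longrightarrow> A $$ (i, i) = 1)"

definition last_col_ones :: "nat \<Rightarrow> complex mat" where
  "last_col_ones M = mat M M (\<lambda>(i, j). if j = M - 1 then 1 else 0)"

definition subdiag_E :: "nat \<Rightarrow> complex mat" where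
  "subdiag_E L = mat L L (\<lambda>(i, j). if i = j + 1 then 1 else 0)"

definition cmat :: "real mat \<Rightarrow> complex mat" where
  "cmat Q = map_mat complex_of_real Q"

definition composite_C :: "nat \<Rightarrow> nat \<Rightarrow> nat \<Rightarrow> real mat \<Rightarrow> complex mat \<Rightarrow> real \<Rightarrow> complex mat" where
  "composite_C L M N Q A \<mu> =
     1\<^sub>m (L * M * N)
     - complex_of_real \<mu> \<cdot>\<^sub>m kron (1\<^sub>m L) (kron (cmat Q) A)
     - kron (subdiag_E L) (kron (last_col_ones M) (1\<^sub>m N))"

definition precond_P :: "nat \<Rightarrow> nat \<Rightarrow> nat \<Rightarrow> real mat \<Rightarrow> complex mat \<Rightarrow> real \<Rightarrow> complex mat" where
  "precond_P L M N QD A \<mu> =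
     1\<^sub>m (L * M * N) - complex_of_real \<mu> \<cdot>\<^sub>m kron (1\<^sub>m L) (kron (cmat QD) A)"

definition smoother_T :: "nat \<Rightarrow> nat \<Rightarrow> nat \<Rightarrow> real mat \<Rightarrow> real mat \<Rightarrow> complex mat \<Rightarrow> real \<Rightarrow> nat \<Rightarrow> complex mat" where
  "smoother_T L M N Q QD A \<mu> k =
     (1\<^sub>m (L * M * N) - the (mat_inverse (precond_P L M N QD A \<mu>)) * composite_C L M N Q A \<mu>) ^\<^sub>m k"

end

theory Submission
  imports Defs
begin

lemma sum_split_mult: "(\<Sum>j<a*b. (f::nat\<Rightarrow>'a::comm_monoid_add) j) = (\<Sum>m<a. \<Sum>t<b. f (m*b+t))"
proof -
  have "(\<Sum>j<a*b. f j) = (\<Sum>m<a. sum f {m*b..<m*b+b})"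
    using sum.nat_group[of f b a] by simp
  also have "\<dots> = (\<Sum>m<a. \<Sum>t<b. f (m*b+t))"
  proof (rule sum.cong[OF refl])
    fix m
    have "sum f {m*b..<m*b+b} = sum (\<lambda>t. f (t + m*b)) {0..<b}"
      using sum.shift_bounds_nat_ivl[of f 0 "m*b" b] by (simp add: add.commute)
    then show "sum f {m*b..<m*b+b} = (\<Sum>t<b. f (m*b+t))"
      by (simp add: atLeast0LessThan add.commute)
  qed
  finally show ?thesis .
qed

lemma kron_carrier: "kron A B \<in> carrier_mat (dim_row A * dim_row B) (dim_col A * dim_col B)"
  unfolding kron_def by simp

lemma kron_dims[simp]: "dim_row (kron A B) = dim_row A * dim_row B" "dim_col (kron A B) = dim_col A * dim_col B"
  unfolding kron_def by simp_all

lemma kron_index: "i < dim_row A * dim_row B \<Longrightarrow> j < dim_col A * dim_col B \<Longrightarrow>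
  kron A B $$ (i,j) = A $$ (i div dim_row B, j div dim_col B) * B $$ (i mod dim_row B, j mod dim_col B)"
  unfolding kron_def by simp

lemma div_mod_lt: "i < a * (b::nat) \<Longrightarrow> i div b < a \<and> i mod b < b"
  by (metis less_mult_imp_div_less mod_less_divisor mult_zero_right not_less_zero zero_less_iff_neq_zero)

lemma kron_mult:
  fixes A B C D :: "'a :: comm_ring_1 mat"
  assumes A: "A \<in> carrier_mat a1 a2" and C: "C \<in> carrier_mat a2 a3"
    and B: "B \<in> carrier_mat b1 b2" and D: "D \<in> carrier_mat b2 b3"
  shows "kron A B * kron C D = kron (A * C) (B * D)"
proof (rule eq_matI)
  show "dim_row (kron A B * kron C D) = dim_row (kron (A * C) (B * D))" using A B C D by simp
  show "dim_col (kron A B * kron C D) = dim_col (kron (A * C) (B * D))" using A B C D by simp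
  fix i k assume i: "i < dim_row (kron (A * C) (B * D))" and k: "k < dim_col (kron (A * C) (B * D))"
  have i': "i < a1*b1" and k': "k < a3*b3" using i k A B C D by auto
  have "(kron A B * kron C D) $$ (i,k) = (\<Sum>j<a2*b2. kron A B $$ (i,j) * kron C D $$ (j,k))"
    using i' k' A B C D by (simp add: scalar_prod_def atLeast0LessThan)
  also have "\<dots> = (\<Sum>m<a2. \<Sum>t<b2. kron A B $$ (i,m*b2+t) * kron C D $$ (m*b2+t,k))"
    by (rule sum_split_mult)
  also have "\<dots> = (\<Sum>m<a2. \<Sum>t<b2. (A $$ (i div b1, m) * C $$ (m, k div b3)) *
        (B $$ (i mod b1, t) * D $$ (t, k mod b3)))"
  proof (intro sum.cong refl)
    fix m t assume m: "m \<in> {..<a2}" and t: "t \<in> {..<b2}"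
    have jl: "m*b2+t < a2*b2"
    proof -
      have "m*b2+t < m*b2 + b2" using t by simp
      also have "\<dots> = (m+1)*b2" by simp
      also have "\<dots> \<le> a2*b2" using m by (intro mult_right_mono) auto
      finally show ?thesis .
    qed
    have dv: "(m*b2+t) div b2 = m" "(m*b2+t) mod b2 = t" using t by auto
    show "kron A B $$ (i,m*b2+t) * kron C D $$ (m*b2+t,k) = (A $$ (i div b1, m) * C $$ (m, k div b3)) *
        (B $$ (i mod b1, t) * D $$ (t, k mod b3))"
      using A B C D i' k' jl dv t by (simp add: kron_index ac_simps)
  qed
  also have "\<dots> = (\<Sum>m<a2. A $$ (i div b1, m) * C $$ (m, k div b3)) * (\<Sum>t<b2. B $$ (i mod b1, t) * D $$ (t, k mod b3))"
    by (simp add: sum_product)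
  also have "\<dots> = kron (A * C) (B * D) $$ (i,k)"
    using A B C D i' k' div_mod_lt[OF i'] div_mod_lt[OF k']
    by (simp add: kron_index scalar_prod_def atLeast0LessThan)
  finally show "(kron A B * kron C D) $$ (i,k) = kron (A * C) (B * D) $$ (i,k)" .
qed

definition nrm :: "complex mat \<Rightarrow> real" where
  "nrm X = (\<Sum>i<dim_row X. \<Sum>j<dim_col X. cmod (X $$ (i,j)))"

lemma nrm_nonneg: "0 \<le> nrm X"
  unfolding nrm_def by (intro sum_nonneg) auto

lemma row_le_nrm: "i < dim_row X \<Longrightarrow> (\<Sum>j<dim_col X. cmod (X $$ (i,j))) \<le> nrm X"
  unfolding nrm_def by (rule member_le_sum) (auto intro: sum_nonneg)

lemma entry_le_row: "j < dim_col X \<Longrightarrow> cmod (X $$ (i,j)) \<le> (\<Sum>j<dim_col X. cmod (X $$ (i,j)))"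
  by (rule member_le_sum) auto

lemma nrm_mult: assumes A: "A \<in> carrier_mat n m" and B: "B \<in> carrier_mat m p"
  shows "nrm (A * B) \<le> nrm A * nrm B"
proof -
  have "nrm (A * B) = (\<Sum>i<n. \<Sum>k<p. cmod (\<Sum>j<m. A $$ (i,j) * B $$ (j,k)))"
    unfolding nrm_def using A B by (simp add: scalar_prod_def atLeast0LessThan)
  also have "\<dots> \<le> (\<Sum>i<n. \<Sum>k<p. \<Sum>j<m. cmod (A $$ (i,j)) * cmod (B $$ (j,k)))"
    by (intro sum_mono) (metis (no_types, lifting) norm_mult norm_sum sum.cong)
  also have "\<dots> = (\<Sum>i<n. \<Sum>j<m. cmod (A $$ (i,j)) * (\<Sum>k<p. cmod (B $$ (j,k))))"
    by (simp add: sum_distrib_left sum.swap[of _ "{..<p}"])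
  also have "\<dots> \<le> (\<Sum>i<n. \<Sum>j<m. cmod (A $$ (i,j)) * nrm B)"
  proof (intro sum_mono mult_left_mono)
    fix j assume "j \<in> {..<m}"
    then show "(\<Sum>k<p. cmod (B $$ (j,k))) \<le> nrm B" using row_le_nrm[of j B] B by auto
  qed auto
  also have "\<dots> = nrm A * nrm B"
    unfolding nrm_def using A by (simp add: sum_distrib_right)
  finally show ?thesis .
qed

lemma nrm_add: assumes A: "A \<in> carrier_mat n m" and B: "B \<in> carrier_mat n m"
  shows "nrm (A + B) \<le> nrm A + nrm B"
proof -
  have "nrm (A + B) = (\<Sum>i<n. \<Sum>j<m. cmod (A $$ (i,j) + B $$ (i,j)))"
    unfolding nrm_def using A B by simp
  also have "\<dots> \<le> (\<Sum>i<n. \<Sum>j<m. cmod (A $$ (i,j)) + cmod (B $$ (i,j)))"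
    by (intro sum_mono norm_triangle_ineq)
  also have "\<dots> = nrm A + nrm B" unfolding nrm_def using A B by (simp add: sum.distrib)
  finally show ?thesis .
qed

lemma nrm_minus: assumes A: "A \<in> carrier_mat n m" and B: "B \<in> carrier_mat n m"
  shows "nrm (A - B) \<le> nrm A + nrm B"
proof -
  have "nrm (A - B) = (\<Sum>i<n. \<Sum>j<m. cmod (A $$ (i,j) - B $$ (i,j)))"
    unfolding nrm_def using A B by simp
  also have "\<dots> \<le> (\<Sum>i<n. \<Sum>j<m. cmod (A $$ (i,j)) + cmod (B $$ (i,j)))"
    by (intro sum_mono norm_triangle_ineq4)
  also have "\<dots> = nrm A + nrm B" unfolding nrm_def using A B by (simp add: sum.distrib)
  finally show ?thesis .
qed

lemma nrm_smult: "nrm (c \<cdot>\<^sub>m A) = cmod c * nrm A"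
  unfolding nrm_def by (simp add: sum_distrib_left norm_mult)

lemma eigen_le_nrm: assumes A: "A \<in> carrier_mat n n" and ev: "eigenvalue A l"
  shows "cmod l \<le> nrm A"
proof -
  from ev obtain v where v: "v \<in> carrier_vec n" "v \<noteq> 0\<^sub>v n" "A *\<^sub>v v = l \<cdot>\<^sub>v v"
    unfolding eigenvalue_def eigenvector_def using A by auto
  have "\<exists>i<n. v $ i \<noteq> 0"
  proof (rule ccontr)
    assume "\<not> ?thesis"
    then have "v = 0\<^sub>v n" using v(1) by (intro eq_vecI) auto
    with v(2) show False by simp
  qed
  then obtain i0 where i0: "i0 < n" by auto
  define S where "S = (\<lambda>j. cmod (v $ j)) ` {..<n}"
  have fS: "finite S" "S \<noteq> {}" unfolding S_def using i0 by auto
  obtain i where i: "i < n" "cmod (v $ i) = Max S"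
    using Max_in[OF fS] unfolding S_def by auto
  have mx: "\<And>j. j < n \<Longrightarrow> cmod (v $ j) \<le> cmod (v $ i)"
    using i fS unfolding S_def by auto
  have vi: "0 < cmod (v $ i)"
  proof -
    from \<open>\<exists>i<n. v $ i \<noteq> 0\<close> obtain j where "j < n" "v $ j \<noteq> 0" by auto
    then show ?thesis using mx[of j] by (smt (verit) norm_ge_zero zero_less_norm_iff)
  qed
  have "cmod l * cmod (v $ i) = cmod ((A *\<^sub>v v) $ i)"
    using v(3) i v(1) by (simp add: norm_mult)
  also have "\<dots> = cmod (\<Sum>j<n. A $$ (i,j) * v $ j)"
    using A v(1) i by (simp add: scalar_prod_def atLeast0LessThan)
  also have "\<dots> \<le> (\<Sum>j<n. cmod (A $$ (i,j)) * cmod (v $ i))"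
    by (rule order_trans[OF norm_sum], intro sum_mono) (auto simp: norm_mult intro!: mult_left_mono mx)
  also have "\<dots> = (\<Sum>j<n. cmod (A $$ (i,j))) * cmod (v $ i)" by (simp add: sum_distrib_right)
  also have "\<dots> \<le> nrm A * cmod (v $ i)"
    using row_le_nrm[of i A] A i vi by (intro mult_right_mono) auto
  finally show ?thesis using vi by simp
qed

lemma spec_le_nrm: assumes A: "A \<in> carrier_mat n n" and n: "0 < n"
  shows "spectral_radius A \<le> nrm A"
proof -
  from spectral_radius_mem_max(1)[OF A n] obtain l where "l \<in> spectrum A" "spectral_radius A = cmod l"
    by auto
  then show ?thesis using eigen_le_nrm[OF A] unfolding spectrum_def by auto
qed

lemma sub_telescope: assumes "A \<in> carrier_mat n m" "B \<in> carrier_mat n m" "C \<in> carrier_mat n m"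
  shows "(A - B) + (B - C) = (A - C :: complex mat)"
  using assms by (intro eq_matI) auto

lemma nrm_pow_Suc: assumes N: "N \<in> carrier_mat n n"
  shows "nrm (N ^\<^sub>m Suc k) \<le> nrm N ^ Suc k"
proof (induction k)
  case 0 then show ?case using N by simp
next
  case (Suc k)
  have "nrm (N ^\<^sub>m Suc (Suc k)) = nrm (N ^\<^sub>m Suc k * N)" by simp
  also have "\<dots> \<le> nrm (N ^\<^sub>m Suc k) * nrm N" using N by (intro nrm_mult) auto
  also have "\<dots> \<le> nrm N ^ Suc k * nrm N" using Suc nrm_nonneg by (intro mult_right_mono) auto
  finally show ?case by (simp add: mult.commute)
qed


lemma pow_perturb: assumes X: "X \<in> carrier_mat n n" and N: "N \<in> carrier_mat n n"
  shows "nrm (X ^\<^sub>m Suc k - N ^\<^sub>m Suc k) \<le> real (Suc k) * nrm (X - N) * (nrm N + nrm (X - N)) ^ k"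
proof (induction k)
  case 0 then show ?case using X N by simp
next
  case (Suc k)
  define a where "a = nrm N"
  define r where "r = nrm (X - N)"
  have a0: "0 \<le> a" and r0: "0 \<le> r" unfolding a_def r_def by (auto intro: nrm_nonneg)
  have Xk: "X ^\<^sub>m Suc k \<in> carrier_mat n n" and Nk: "N ^\<^sub>m Suc k \<in> carrier_mat n n" using X N by auto
  have nX: "nrm X \<le> a + r"
  proof -
    have "X = N + (X - N)" using X N by (intro eq_matI) auto
    then have "nrm X = nrm (N + (X - N))" by (rule arg_cong)
    also have "\<dots> \<le> a + r" unfolding a_def r_def using X N by (intro nrm_add) auto
    finally show ?thesis .
  qed
  have eq: "X ^\<^sub>m Suc (Suc k) - N ^\<^sub>m Suc (Suc k) = (X ^\<^sub>m Suc k - N ^\<^sub>m Suc k) * X + N ^\<^sub>m Suc k * (X - N)"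
  proof -
    have 1: "(X ^\<^sub>m Suc k - N ^\<^sub>m Suc k) * X = X ^\<^sub>m Suc k * X - N ^\<^sub>m Suc k * X"
      using Xk Nk X by (rule minus_mult_distrib_mat)
    have 2: "N ^\<^sub>m Suc k * (X - N) = N ^\<^sub>m Suc k * X - N ^\<^sub>m Suc k * N"
      using Nk X N by (rule mult_minus_distrib_mat)
    have 3: "(X ^\<^sub>m Suc k * X - N ^\<^sub>m Suc k * X) + (N ^\<^sub>m Suc k * X - N ^\<^sub>m Suc k * N) = X ^\<^sub>m Suc k * X - N ^\<^sub>m Suc k * N"
      by (rule sub_telescope[of _ n n]) (use Xk Nk X N in auto)
    show ?thesis unfolding 1 2 3 by simp
  qed
  have "nrm (X ^\<^sub>m Suc (Suc k) - N ^\<^sub>m Suc (Suc k)) \<le> nrm ((X ^\<^sub>m Suc k - N ^\<^sub>m Suc k) * X) + nrm (N ^\<^sub>m Suc k * (X - N))"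
    unfolding eq by (rule nrm_add[OF mult_carrier_mat[OF minus_carrier_mat[OF Nk] X] mult_carrier_mat[OF Nk minus_carrier_mat[OF N]]])
  also have "\<dots> \<le> nrm (X ^\<^sub>m Suc k - N ^\<^sub>m Suc k) * nrm X + nrm (N ^\<^sub>m Suc k) * r"
    unfolding r_def by (rule add_mono[OF nrm_mult[OF minus_carrier_mat[OF Nk] X] nrm_mult[OF Nk minus_carrier_mat[OF N]]])
  also have "\<dots> \<le> (real (Suc k) * r * (a + r) ^ k) * (a + r) + a ^ Suc k * r"
  proof (rule add_mono)
    show "nrm (X ^\<^sub>m Suc k - N ^\<^sub>m Suc k) * nrm X \<le> (real (Suc k) * r * (a + r) ^ k) * (a + r)"
      by (rule mult_mono) (use Suc[folded a_def r_def] nX a0 r0 nrm_nonneg in auto)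
    show "nrm (N ^\<^sub>m Suc k) * r \<le> a ^ Suc k * r"
      by (rule mult_right_mono) (use nrm_pow_Suc[OF N, of k, folded a_def] r0 in auto)
  qed
  also have "\<dots> \<le> (real (Suc k) * r * (a + r) ^ k) * (a + r) + (a + r) ^ Suc k * r"
    using a0 r0 by (intro add_left_mono mult_right_mono power_mono) auto
  also have "\<dots> = real (Suc (Suc k)) * r * (a + r) ^ Suc k" by (simp add: algebra_simps)
  finally show ?case unfolding a_def r_def .
qed

definition lp :: "(nat \<Rightarrow> real) \<Rightarrow> nat \<Rightarrow> nat \<Rightarrow> real poly" where
  "lp tau M j = Polynomial.smult (1 / (\<Prod>i\<in>{0..<M} - {j}. (tau j - tau i))) (\<Prod>i\<in>{0..<M} - {j}. [:- tau i, 1:])"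

lemma poly_lp: "poly (lp tau M j) s = lagrange_basis tau M j s"
  unfolding lp_def lagrange_basis_def by (simp add: poly_prod prod_dividef)

lemma degree_lp: "degree (lp tau M j) \<le> M - 1" if "j < M"
proof -
  have "degree (lp tau M j) \<le> degree (\<Prod>i\<in>{0..<M} - {j}. [:- tau i, 1:])"
    unfolding lp_def by (rule Polynomial.degree_smult_le)
  also have "\<dots> \<le> sum (degree \<circ> (\<lambda>i. [:- tau i, 1:])) ({0..<M} - {j})"
    by (rule degree_prod_sum_le) simp
  also have "\<dots> = card ({0..<M} - {j})" by simp
  also have "\<dots> \<le> M - 1"
    using that by (auto simp: card_Diff_singleton)
  finally show ?thesis .
qed

lemma lagrange_nodes: assumes inc: "\<And>i j. i < j \<Longrightarrow> j < M \<Longrightarrow> tau i < tau j"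
  and j: "j < M" and k: "k < M"
  shows "lagrange_basis tau M j (tau k) = (if j = k then 1 else 0)"
proof (cases "j = k")
  case True
  have "\<And>i. i \<in> {0..<M} - {j} \<Longrightarrow> (tau j - tau i) / (tau j - tau i) = 1"
  proof -
    fix i assume i: "i \<in> {0..<M} - {j}"
    then have "tau i \<noteq> tau j" using inc[of i j] inc[of j i] j by (cases "i < j") auto
    then show "(tau j - tau i) / (tau j - tau i) = 1" by simp
  qed
  then show ?thesis using True unfolding lagrange_basis_def by simp
next
  case False
  then have "k \<in> {0..<M} - {j}" using k by auto
  then have "(\<Prod>i\<in>{0..<M} - {j}. (tau k - tau i) / (tau j - tau i)) = 0"
    by (intro prod_zero) auto
  then show ?thesis using False unfolding lagrange_basis_def by simp
qed

lemma antideriv_exists: "\<exists>F. pderiv F = (p :: real poly) \<and> degree F \<le> Suc (degree p)"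
proof -
  define F where "F = Poly (0 # map (\<lambda>i. coeff p i / real (Suc i)) [0..<Suc (degree p)])"
  have cF: "coeff F (Suc n) = (if n < Suc (degree p) then coeff p n / real (Suc n) else 0)" for n
    unfolding F_def by (simp del: upt_Suc add: nth_default_def)
  have "pderiv F = p"
  proof (rule poly_eqI)
    fix n
    show "coeff (pderiv F) n = coeff p n"
      unfolding coeff_pderiv cF by (auto simp: coeff_eq_0)
  qed
  moreover have "degree F \<le> Suc (degree p)"
  proof (rule degree_le, intro allI impI)
    fix i assume "Suc (degree p) < i"
    then obtain n where "i = Suc n" "n \<ge> Suc (degree p)" by (cases i) auto
    then show "coeff F i = 0" using cF[of n] by simp
  qed
  ultimately show ?thesis by blast
qed

lemma integral_poly: assumes "pderiv F = (p :: real poly)" and "0 \<le> x"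
  shows "integral {0..x} (poly p) = poly F x - poly F 0"
proof -
  have "(poly p has_integral (poly F x - poly F 0)) {0..x}"
  proof (rule fundamental_theorem_of_calculus[OF assms(2)])
    fix y :: real
    have "(poly F has_real_derivative poly p y) (at y within {0..x})"
      using poly_DERIV[of F y] assms(1) by (auto intro: has_field_derivative_at_within)
    then show "(poly F has_vector_derivative poly p y) (at y within {0..x})"
      by (simp add: has_real_derivative_iff_has_vector_derivative)
  qed
  then show ?thesis by (rule integral_unique)
qed

lemma collQ_det_nz: assumes M0: "0 < M" and pos: "0 < tau 0" and inc: "\<And>i j. i < j \<Longrightarrow> j < M \<Longrightarrow> tau i < tau j"
  shows "det (coll_Q tau M) \<noteq> 0"
proof
  have Qc: "coll_Q tau M \<in> carrier_mat M M" unfolding coll_Q_def by simp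
  assume "det (coll_Q tau M) = 0"
  then obtain v where v: "v \<in> carrier_vec M" "v \<noteq> 0\<^sub>v M" "coll_Q tau M *\<^sub>v v = 0\<^sub>v M"
    using det_0_iff_vec_prod_zero_field[OF Qc] by auto
  define p where "p = (\<Sum>j<M. Polynomial.smult (v $ j) (lp tau M j))"
  have pp: "poly p s = (\<Sum>j<M. v $ j * lagrange_basis tau M j s)" for s
    unfolding p_def by (simp add: poly_sum poly_lp)
  have degp: "degree p \<le> M - 1"
    unfolding p_def by (rule degree_sum_le) (use degree_lp[of _ M tau] in \<open>auto intro!: order_trans[OF Polynomial.degree_smult_le]\<close>)
  have tpos: "\<And>m. m < M \<Longrightarrow> 0 < tau m"
    using pos inc by (metis gr_zeroI order.strict_trans)
  obtain F where F: "pderiv F = p" "degree F \<le> Suc (degree p)" using antideriv_exists by blast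
  define G where "G = F - [:poly F 0:]"
  have pG: "poly G x = poly F x - poly F 0" for x unfolding G_def by simp
  have degG: "degree G \<le> M"
  proof -
    have "degree F \<le> M" using F(2) degp assms by (cases M) auto
    then show ?thesis unfolding G_def by (intro degree_diff_le) auto
  qed
  have intp: "integral {0..tau m} (poly p) = 0" if m: "m < M" for m
  proof -
    have int: "\<And>j. (\<lambda>s. v $ j * lagrange_basis tau M j s) integrable_on {0..tau m}"
    proof -
      fix j
      have "continuous_on {0..tau m} (\<lambda>s. v $ j * poly (lp tau M j) s)"
        by (intro continuous_intros)
      then show "(\<lambda>s. v $ j * lagrange_basis tau M j s) integrable_on {0..tau m}"
        by (auto simp: poly_lp intro: integrable_continuous_interval)
    qed
    have "integral {0..tau m} (poly p) = integral {0..tau m} (\<lambda>s. \<Sum>j<M. v $ j * lagrange_basis tau M j s)"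
      by (rule arg_cong[where f="integral _"]) (simp add: pp fun_eq_iff)
    also have "\<dots> = (\<Sum>j<M. integral {0..tau m} (\<lambda>s. v $ j * lagrange_basis tau M j s))"
      by (rule integral_sum) (auto intro: int)
    also have "\<dots> = (\<Sum>j<M. coll_Q tau M $$ (m, j) * v $ j)"
      using m by (simp add: coll_Q_def mult.commute)
    also have "\<dots> = (coll_Q tau M *\<^sub>v v) $ m"
      using m v(1) Qc by (simp add: scalar_prod_def atLeast0LessThan coll_Q_def)
    also have "\<dots> = 0" using v(3) m by simp
    finally show ?thesis .
  qed
  have rootsG: "insert 0 (tau ` {..<M}) \<subseteq> {x. poly G x = 0}"
  proof
    fix x assume "x \<in> insert 0 (tau ` {..<M})"
    then show "x \<in> {x. poly G x = 0}"
    proof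
      assume "x = 0" then show ?thesis by (simp add: pG)
    next
      assume "x \<in> tau ` {..<M}"
      then obtain m where m: "m < M" "x = tau m" by auto
      have "poly G x = integral {0..tau m} (poly p)"
        using integral_poly[OF F(1), of "tau m"] tpos[OF m(1)] m(2) by (simp add: pG)
      then show ?thesis using intp[OF m(1)] by simp
    qed
  qed
  have cardR: "card (insert 0 (tau ` {..<M})) = Suc M"
  proof -
    have inj: "inj_on tau {..<M}"
    proof (rule inj_onI)
      fix i j assume "i \<in> {..<M}" "j \<in> {..<M}" "tau i = tau j"
      then show "i = j" using inc[of i j] inc[of j i] by (cases "i < j"; cases "j < i") auto
    qed
    have "0 \<notin> tau ` {..<M}" using tpos by fastforce
    then show ?thesis using card_image[OF inj] by simp
  qed
  have "G = 0"
  proof (rule ccontr)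
    assume "G \<noteq> 0"
    then have "card {x. poly G x = 0} \<le> degree G" by (rule card_poly_roots_bound)
    moreover have "card (insert 0 (tau ` {..<M})) \<le> card {x. poly G x = 0}"
      by (rule card_mono[OF poly_roots_finite[OF \<open>G \<noteq> 0\<close>] rootsG])
    ultimately show False using cardR degG by simp
  qed
  then have "F = [:poly F 0:]" unfolding G_def by simp
  then have "pderiv F = pderiv [:poly F 0:]" by (rule arg_cong)
  then have "p = 0" using F(1) by (simp add: pderiv_pCons)
  have "v = 0\<^sub>v M"
  proof (rule eq_vecI)
    fix k assume k: "k < dim_vec (0\<^sub>v M)"
    then have k': "k < M" by simp
    have "poly p (tau k) = (\<Sum>j<M. v $ j * (if j = k then 1 else 0))"
    proof -
      have ln: "\<And>j. j < M \<Longrightarrow> lagrange_basis tau M j (tau k) = (if j = k then 1 else 0)"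
        by (rule lagrange_nodes) (use inc k' in auto)
      show ?thesis unfolding pp by (intro sum.cong) (auto simp: ln)
    qed
    also have "\<dots> = v $ k" using k' by (simp add: if_distrib cong: if_cong)
    finally show "v $ k = 0\<^sub>v M $ k" using \<open>p = 0\<close> k' by simp
  qed (use v(1) in simp)
  with v(2) show False by simp
qed

lemma cmat_carrier: "A \<in> carrier_mat n m \<Longrightarrow> cmat A \<in> carrier_mat n m"
  unfolding cmat_def by simp

lemma cmat_mult: assumes "A \<in> carrier_mat n m" "B \<in> carrier_mat m p"
  shows "cmat (A * B) = cmat A * cmat B"
  unfolding cmat_def using assms
  by (intro eq_matI) (auto simp: scalar_prod_def of_real_sum)

lemma cmat_transpose: "cmat (transpose_mat A) = transpose_mat (cmat A)"
  unfolding cmat_def by (intro eq_matI) auto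

lemma det_cmat: "det (cmat A) = complex_of_real (det A)"
  unfolding cmat_def by (rule of_real_hom.hom_det)

lemma kron_one: "kron (1\<^sub>m a) (1\<^sub>m b) = (1\<^sub>m (a*b) :: 'a :: semiring_1 mat)"
proof (rule eq_matI)
  fix i j assume i: "i < dim_row (1\<^sub>m (a*b) :: 'a mat)" and j: "j < dim_col (1\<^sub>m (a*b) :: 'a mat)"
  then have i': "i < a*b" and j': "j < a*b" by auto
  have "(i div b = j div b \<and> i mod b = j mod b) \<longleftrightarrow> i = j"
    by (metis div_mult_mod_eq)
  then show "kron (1\<^sub>m a) (1\<^sub>m b) $$ (i, j) = (1\<^sub>m (a*b) :: 'a mat) $$ (i, j)"
    using i' j' div_mod_lt[OF i'] div_mod_lt[OF j'] by (auto simp: kron_index)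
qed auto

lemma kron_minus_right: assumes "B \<in> carrier_mat p q" "C \<in> carrier_mat p q"
  shows "kron A (B - C) = kron A B - kron A (C :: 'a :: comm_ring_1 mat)"
  using assms by (intro eq_matI) (auto simp: kron_index algebra_simps div_mod_lt)

lemma kron_minus_left: assumes "B \<in> carrier_mat p q" "C \<in> carrier_mat p q"
  shows "kron (B - C) A = kron B A - kron C (A :: 'a :: comm_ring_1 mat)"
  using assms by (intro eq_matI) (auto simp: kron_index algebra_simps div_mod_lt)

lemma kron_zero: "kron A (0\<^sub>m p q) = (0\<^sub>m (dim_row A * p) (dim_col A * q) :: 'a :: comm_ring_1 mat)"
  by (intro eq_matI) (auto simp: kron_index div_mod_lt)

lemma kron_zero_left: "kron (0\<^sub>m p q) A = (0\<^sub>m (p * dim_row A) (q * dim_col A) :: 'a :: comm_ring_1 mat)"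
  by (intro eq_matI) (auto simp: kron_index div_mod_lt)

lemma strict_upper_pow: assumes X: "X \<in> carrier_mat m m"
  and su: "\<And>i j. i < m \<Longrightarrow> j < m \<Longrightarrow> j \<le> i \<Longrightarrow> X $$ (i,j) = (0 :: complex)"
  shows "i < m \<Longrightarrow> j < m \<Longrightarrow> j < i + k \<Longrightarrow> (X ^\<^sub>m k) $$ (i,j) = 0"
proof (induction k arbitrary: i j)
  case 0 then show ?case using X by simp
next
  case (Suc k)
  have Xk: "X ^\<^sub>m k \<in> carrier_mat m m" using X by (rule pow_carrier_mat)
  have "(X ^\<^sub>m Suc k) $$ (i,j) = (X ^\<^sub>m k * X) $$ (i,j)" by simp
  also have "\<dots> = (\<Sum>l<m. (X ^\<^sub>m k) $$ (i,l) * X $$ (l,j))"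
    using Xk X Suc.prems by (simp add: scalar_prod_def atLeast0LessThan)
  also have "\<dots> = 0"
  proof (rule sum.neutral, rule ballI)
    fix l assume l: "l \<in> {..<m}"
    show "(X ^\<^sub>m k) $$ (i,l) * X $$ (l,j) = 0"
    proof (cases "l < i + k")
      case True then show ?thesis using Suc.IH[of i l] Suc.prems l by simp
    next
      case False then show ?thesis using su[of l j] Suc.prems l by simp
    qed
  qed
  finally show ?case .
qed

lemma inv_from_invertible: assumes P: "P \<in> carrier_mat n n" and inv: "invertible_mat (P :: complex mat)"
  shows "P * the (mat_inverse P) = 1\<^sub>m n \<and> the (mat_inverse P) * P = 1\<^sub>m n \<and> the (mat_inverse P) \<in> carrier_mat n n"
proof (cases "mat_inverse P")
  case None
  from inv obtain B where B: "P * B = 1\<^sub>m (dim_row P)" "B * P = 1\<^sub>m (dim_row B)"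
    unfolding invertible_mat_def inverts_mat_def by auto
  have Bc: "B \<in> carrier_mat n n"
  proof -
    have "dim_col B = n" using B(1) P by (metis index_mult_mat(3) index_one_mat(3) carrier_matD(1))
    moreover have "dim_row B = n" using B(2) P by (metis index_mult_mat(3) index_one_mat(3) carrier_matD(2))
    ultimately show ?thesis by auto
  qed
  have "P \<in> Units (ring_mat TYPE(complex) n ())"
    unfolding Units_def ring_mat_def using P Bc B by auto
  then show ?thesis using mat_inverse(1)[OF P None, where b="()"] by blast
next
  case (Some X)
  then show ?thesis using mat_inverse(2)[OF P Some] by simp
qed

lemma lin_a: assumes "Y \<in> carrier_mat n n" "K \<in> carrier_mat n n" "F \<in> carrier_mat n n"
  shows "1\<^sub>m n - c \<cdot>\<^sub>m Y - F = (1\<^sub>m n - K) + (K - c \<cdot>\<^sub>m Y) - (F :: complex mat)"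
  using assms by (intro eq_matI) auto

lemma lin_b: assumes "Pm \<in> carrier_mat n n" "U \<in> carrier_mat n n" "V \<in> carrier_mat n n" "K \<in> carrier_mat n n"
  shows "1\<^sub>m n - ((Pm - U) + K - V) = (1\<^sub>m n - K) + (U - Pm + (V :: complex mat))"
  using assms by (intro eq_matI) auto

lemma lin_c: assumes "Pm \<in> carrier_mat n n" "U \<in> carrier_mat n n" "V \<in> carrier_mat n n"
  shows "c \<cdot>\<^sub>m Pm = U - V \<longleftrightarrow> U - c \<cdot>\<^sub>m Pm = (V :: complex mat)"
proof
  assume h: "c \<cdot>\<^sub>m Pm = U - V"
  show "U - c \<cdot>\<^sub>m Pm = V" unfolding h using assms by (intro eq_matI) auto
next
  assume h: "U - c \<cdot>\<^sub>m Pm = V"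
  show "c \<cdot>\<^sub>m Pm = U - V" unfolding h[symmetric] using assms by (intro eq_matI) auto
qed

lemma alg_T1:
  fixes P Pinv B K F :: "complex mat"
  assumes P: "P \<in> carrier_mat n n" and Pi: "Pinv \<in> carrier_mat n n" and B: "B \<in> carrier_mat n n"
    and K: "K \<in> carrier_mat n n" and F: "F \<in> carrier_mat n n"
    and PiP: "Pinv * P = 1\<^sub>m n" and Pdef: "P = 1\<^sub>m n - c \<cdot>\<^sub>m B"
  shows "1\<^sub>m n - Pinv * (1\<^sub>m n - c \<cdot>\<^sub>m (B * K) - F) = (1\<^sub>m n - K) + Pinv * (K - 1\<^sub>m n + F)"
proof -
  have BK: "B * K \<in> carrier_mat n n" using B K by simp
  have cB: "c \<cdot>\<^sub>m B \<in> carrier_mat n n" using B by simp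
  have PK: "P * K = K - c \<cdot>\<^sub>m (B * K)"
  proof -
    have "P * K = 1\<^sub>m n * K - (c \<cdot>\<^sub>m B) * K" unfolding Pdef
      by (rule minus_mult_distrib_mat[OF one_carrier_mat cB K])
    also have "\<dots> = K - c \<cdot>\<^sub>m (B * K)"
      by (simp add: left_mult_one_mat[OF K] mult_smult_assoc_mat[OF B K])
    finally show ?thesis .
  qed
  have C_eq: "1\<^sub>m n - c \<cdot>\<^sub>m (B * K) - F = (1\<^sub>m n - K) + P * K - F"
    unfolding PK by (rule lin_a[OF BK K F])
  have PKc: "P * K \<in> carrier_mat n n" using P K by simp
  have m1: "1\<^sub>m n - K \<in> carrier_mat n n" by (rule minus_carrier_mat[OF K])
  have "Pinv * ((1\<^sub>m n - K) + P * K - F) = Pinv * ((1\<^sub>m n - K) + P * K) - Pinv * F"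
    by (rule mult_minus_distrib_mat[OF Pi add_carrier_mat[OF PKc] F])
  also have "Pinv * ((1\<^sub>m n - K) + P * K) = Pinv * (1\<^sub>m n - K) + Pinv * (P * K)"
    by (rule mult_add_distrib_mat[OF Pi m1 PKc])
  also have "Pinv * (1\<^sub>m n - K) = Pinv * 1\<^sub>m n - Pinv * K"
    by (rule mult_minus_distrib_mat[OF Pi one_carrier_mat K])
  also have "Pinv * 1\<^sub>m n = Pinv" by (rule right_mult_one_mat[OF Pi])
  also have "Pinv * (P * K) = (Pinv * P) * K" by (rule assoc_mult_mat[OF Pi P K, symmetric])
  also have "(Pinv * P) * K = K" unfolding PiP by (rule left_mult_one_mat[OF K])
  finally have L: "Pinv * (1\<^sub>m n - c \<cdot>\<^sub>m (B * K) - F) = (Pinv - Pinv * K) + K - Pinv * F"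
    unfolding C_eq .
  have R: "Pinv * (K - 1\<^sub>m n + F) = Pinv * K - Pinv + Pinv * F"
  proof -
    have "Pinv * (K - 1\<^sub>m n + F) = Pinv * (K - 1\<^sub>m n) + Pinv * F"
      by (rule mult_add_distrib_mat[OF Pi minus_carrier_mat[OF one_carrier_mat] F])
    also have "Pinv * (K - 1\<^sub>m n) = Pinv * K - Pinv * 1\<^sub>m n"
      by (rule mult_minus_distrib_mat[OF Pi K one_carrier_mat])
    also have "Pinv * 1\<^sub>m n = Pinv" by (rule right_mult_one_mat[OF Pi])
    finally show ?thesis .
  qed
  show ?thesis unfolding L R
    by (rule lin_b[OF Pi mult_carrier_mat[OF Pi K] mult_carrier_mat[OF Pi F] K])
qed

lemma alg_Pinv:
  fixes P Pinv B Binv :: "complex mat"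
  assumes P: "P \<in> carrier_mat n n" and Pi: "Pinv \<in> carrier_mat n n" and B: "B \<in> carrier_mat n n"
    and Bi: "Binv \<in> carrier_mat n n"
    and PPi: "P * Pinv = 1\<^sub>m n" and Pdef: "P = 1\<^sub>m n - c \<cdot>\<^sub>m B" and BiB: "Binv * B = 1\<^sub>m n"
  shows "c \<cdot>\<^sub>m Pinv = Binv * Pinv - Binv"
proof -
  have cB: "c \<cdot>\<^sub>m B \<in> carrier_mat n n" using B by simp
  have "Binv = Binv * (P * Pinv)" unfolding PPi by (rule right_mult_one_mat[OF Bi, symmetric])
  also have "P * Pinv = 1\<^sub>m n * Pinv - (c \<cdot>\<^sub>m B) * Pinv" unfolding Pdef
    by (rule minus_mult_distrib_mat[OF one_carrier_mat cB Pi])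
  also have "1\<^sub>m n * Pinv = Pinv" by (rule left_mult_one_mat[OF Pi])
  also have "(c \<cdot>\<^sub>m B) * Pinv = c \<cdot>\<^sub>m (B * Pinv)" by (rule mult_smult_assoc_mat[OF B Pi])
  also have "Binv * (Pinv - c \<cdot>\<^sub>m (B * Pinv)) = Binv * Pinv - Binv * (c \<cdot>\<^sub>m (B * Pinv))"
    by (rule mult_minus_distrib_mat[OF Bi Pi smult_carrier_mat[OF mult_carrier_mat[OF B Pi]]])
  also have "Binv * (c \<cdot>\<^sub>m (B * Pinv)) = c \<cdot>\<^sub>m (Binv * (B * Pinv))"
    by (rule mult_smult_distrib[OF Bi mult_carrier_mat[OF B Pi]])
  also have "Binv * (B * Pinv) = (Binv * B) * Pinv" by (rule assoc_mult_mat[OF Bi B Pi, symmetric])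
  also have "(Binv * B) * Pinv = Pinv" unfolding BiB by (rule left_mult_one_mat[OF Pi])
  finally have "Binv * Pinv - c \<cdot>\<^sub>m Pinv = Binv" by (rule sym)
  then show ?thesis using lin_c[OF Pi mult_carrier_mat[OF Bi Pi] Bi] by simp
qed

lemma Pinv_bound:
  fixes Pinv :: "complex mat"
  assumes Pi: "Pinv \<in> carrier_mat n n" and Bi: "Binv \<in> carrier_mat n n"
    and eq: "complex_of_real \<mu> \<cdot>\<^sub>m Pinv = Binv * Pinv - Binv"
    and mu: "2 * nrm Binv + 2 \<le> \<mu>"
  shows "nrm Pinv \<le> 2 * nrm Binv / \<mu>"
proof -
  define b where "b = nrm Binv"
  define p where "p = nrm Pinv"
  have b0: "0 \<le> b" and p0: "0 \<le> p" unfolding b_def p_def by (auto intro: nrm_nonneg)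
  have "\<mu> * p = nrm (complex_of_real \<mu> \<cdot>\<^sub>m Pinv)" unfolding p_def nrm_smult using mu b0 b_def by simp
  also have "\<dots> \<le> nrm (Binv * Pinv) + nrm Binv" unfolding eq
    by (rule nrm_minus[OF mult_carrier_mat[OF Bi Pi] Bi])
  also have "\<dots> \<le> b * p + b" unfolding b_def p_def using nrm_mult[OF Bi Pi] by simp
  finally have h: "\<mu> * p \<le> b * p + b" .
  have mupos: "0 < \<mu>" using mu b0 b_def by simp
  have "\<mu> * p \<le> 2 * b"
  proof -
    have "\<mu> * p = (\<mu> - 2*b) * p + 2 * b * p" by (simp add: algebra_simps)
    have "(\<mu> / 2) * p \<le> (\<mu> - b) * p" using mu b_def p0 by (intro mult_right_mono) auto
    also have "\<dots> \<le> b" using h by (simp add: algebra_simps)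
    finally show ?thesis by simp
  qed
  then show ?thesis unfolding b_def[symmetric] p_def[symmetric] using mupos
    by (simp add: pos_le_divide_eq mult.commute)
qed

lemma kron_carrier': "A \<in> carrier_mat a b \<Longrightarrow> B \<in> carrier_mat c d \<Longrightarrow> kron A B \<in> carrier_mat (a*c) (b*d)"
  unfolding kron_def by auto

lemma kron_pow: assumes X: "X \<in> carrier_mat m m"
  shows "(kron (1\<^sub>m l) (kron X (1\<^sub>m p))) ^\<^sub>m k = kron (1\<^sub>m l) (kron (X ^\<^sub>m k) (1\<^sub>m p) :: complex mat)"
proof (induction k)
  case 0
  have "X ^\<^sub>m 0 = 1\<^sub>m m" using X by simp
  then show ?case using X by (simp add: kron_one)
next
  case (Suc k)
  have Xk: "X ^\<^sub>m k \<in> carrier_mat m m" using X by (rule pow_carrier_mat)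
  have "(kron (1\<^sub>m l) (kron X (1\<^sub>m p))) ^\<^sub>m Suc k =
      kron (1\<^sub>m l) (kron (X ^\<^sub>m k) (1\<^sub>m p)) * kron (1\<^sub>m l) (kron X (1\<^sub>m p))"
    using Suc by simp
  also have "\<dots> = kron (1\<^sub>m l * 1\<^sub>m l) (kron (X ^\<^sub>m k) (1\<^sub>m p) * kron X (1\<^sub>m p))"
    by (rule kron_mult[OF one_carrier_mat one_carrier_mat kron_carrier'[OF Xk one_carrier_mat] kron_carrier'[OF X one_carrier_mat]])
  also have "kron (X ^\<^sub>m k) (1\<^sub>m p) * kron X (1\<^sub>m p) = kron (X ^\<^sub>m k * X) (1\<^sub>m p * 1\<^sub>m p)"
    by (rule kron_mult[OF Xk X one_carrier_mat one_carrier_mat])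
  finally show ?case by simp
qed

lemma det_unit_lower: assumes LQ: "LQ \<in> carrier_mat m m" and u: "unit_lower_triangular (LQ :: real mat)"
  shows "det LQ = 1"
proof -
  have "det LQ = prod_list (diag_mat LQ)"
    by (rule det_lower_triangular[OF _ LQ]) (use u LQ in \<open>auto simp: unit_lower_triangular_def\<close>)
  also have "diag_mat LQ = map (\<lambda>i. 1) [0..<m]"
    unfolding diag_mat_def using u LQ by (auto simp: unit_lower_triangular_def)
  also have "prod_list (map (\<lambda>i. 1::real) [0..<m]) = 1" by (induction m) auto
  finally show ?thesis .
qed

lemma add_sub_cancel_mat: assumes "A \<in> carrier_mat n n" "R \<in> carrier_mat n n"
  shows "(A + R) - A = (R :: complex mat)"
  using assms by (intro eq_matI) auto

lemma sub_zero_mat: "A \<in> carrier_mat n m \<Longrightarrow> A - 0\<^sub>m n m = (A :: complex mat)"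
  by (intro eq_matI) auto

theorem lemma2:
  fixes L M N :: nat and tau :: "nat \<Rightarrow> real" and LQ UQ :: "real mat" and A :: "complex mat"
  assumes "0 < L" and "0 < M" and "0 < N"
    and "right_radau_nodes M tau"
    and "LQ \<in> carrier_mat M M" and "UQ \<in> carrier_mat M M"
    and "unit_lower_triangular LQ" and "upper_triangular UQ"
    and "transpose_mat (coll_Q tau M) = LQ * UQ"
    and "A \<in> carrier_mat N N" and "invertible_mat A"
  shows "\<forall>k \<ge> M. \<exists>\<mu>s > 0. \<exists>c > 0. \<forall>\<mu> > \<mu>s.
           invertible_mat (precond_P L M N (transpose_mat UQ) A \<mu>) \<longrightarrow>
           spectral_radius (smoother_T L M N (coll_Q tau M) (transpose_mat UQ) A \<mu> k) \<le> c / \<mu>"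
proof (intro allI impI)
  fix k assume kM: "M \<le> k"
  note L0 = assms(1) and M0 = assms(2) and N0' = assms(3)
  note LQc = assms(5) and UQc = assms(6) and ult = assms(7) and QT = assms(9)
  note Ac = assms(10) and Ainv = assms(11)
  have hR: "0 < tau 0 \<and> (\<forall>i j. i < j \<and> j < M \<longrightarrow> tau i < tau j)"
    using assms(4) unfolding right_radau_nodes_def by blast
  have pos: "0 < tau 0" and inc: "\<And>i j. i < j \<Longrightarrow> j < M \<Longrightarrow> tau i < tau j"
    using hR by auto
  define Q where "Q = coll_Q tau M"
  have Qc: "Q \<in> carrier_mat M M" unfolding Q_def coll_Q_def by simp
  have detQ: "det Q \<noteq> 0" unfolding Q_def by (rule collQ_det_nz) (use M0 pos inc in auto)
  have "det Q = det (transpose_mat Q)" by (rule det_transpose[OF Qc, symmetric])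
  also have "\<dots> = det LQ * det UQ" unfolding Q_def QT by (rule det_mult[OF LQc UQc])
  also have "\<dots> = det UQ" using det_unit_lower[OF LQc ult] by simp
  finally have detU: "det UQ \<noteq> 0" using detQ by simp
  define QD where "QD = transpose_mat UQ"
  have QDc: "QD \<in> carrier_mat M M" unfolding QD_def using UQc by simp
  have detQD: "det QD \<noteq> 0" unfolding QD_def using det_transpose[OF UQc] detU by simp
  define qd where "qd = cmat QD"
  have qdc: "qd \<in> carrier_mat M M" unfolding qd_def by (rule cmat_carrier[OF QDc])
  have "det qd \<noteq> 0" unfolding qd_def det_cmat using detQD by simp
  then have "qd \<in> Units (ring_mat TYPE(complex) M ())" by (rule det_non_zero_imp_unit[OF qdc])
  then obtain qdi where qdi: "qdi \<in> carrier_mat M M" "qdi * qd = 1\<^sub>m M"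
    unfolding Units_def ring_mat_def by auto
  define Ai where "Ai = the (mat_inverse A)"
  have Aic: "Ai \<in> carrier_mat N N" and AiA: "Ai * A = 1\<^sub>m N"
    using inv_from_invertible[OF Ac Ainv] unfolding Ai_def by auto
  define lt where "lt = cmat (transpose_mat LQ)"
  have ltc: "lt \<in> carrier_mat M M" unfolding lt_def using LQc by (simp add: cmat_carrier)
  have cQ: "cmat Q = qd * lt"
  proof -
    have "Q = transpose_mat (transpose_mat Q)" by simp
    also have "\<dots> = QD * transpose_mat LQ" unfolding Q_def QT QD_def by (rule transpose_mult[OF LQc UQc])
    finally have "Q = QD * transpose_mat LQ" .
    then show ?thesis unfolding qd_def lt_def using cmat_mult[OF QDc, of "transpose_mat LQ" M] LQc by simp
  qed
  define n where "n = L * M * N"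
  have n0: "0 < n" unfolding n_def using L0 M0 N0' by simp
  have nn: "L * (M * N) = n" unfolding n_def by simp
  define Bm where "Bm = kron (1\<^sub>m L) (kron qd A)"
  have Bmc: "Bm \<in> carrier_mat n n"
    using kron_carrier'[OF one_carrier_mat kron_carrier'[OF qdc Ac], of L] unfolding Bm_def nn .
  define Binv where "Binv = kron (1\<^sub>m L) (kron qdi Ai)"
  have Binvc: "Binv \<in> carrier_mat n n"
    using kron_carrier'[OF one_carrier_mat kron_carrier'[OF qdi(1) Aic], of L] unfolding Binv_def nn .
  have BiB: "Binv * Bm = 1\<^sub>m n"
  proof -
    have "Binv * Bm = kron (1\<^sub>m L * 1\<^sub>m L) (kron qdi Ai * kron qd A)"
      unfolding Binv_def Bm_def
      by (rule kron_mult[OF one_carrier_mat one_carrier_mat kron_carrier'[OF qdi(1) Aic] kron_carrier'[OF qdc Ac]])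
    also have "kron qdi Ai * kron qd A = kron (qdi * qd) (Ai * A)" by (rule kron_mult[OF qdi(1) qdc Aic Ac])
    finally have "Binv * Bm = kron (1\<^sub>m L * 1\<^sub>m L) (kron (1\<^sub>m M) (1\<^sub>m N))" unfolding qdi(2) AiA .
    also have "1\<^sub>m L * 1\<^sub>m L = (1\<^sub>m L :: complex mat)" by (rule left_mult_one_mat[OF one_carrier_mat])
    finally show ?thesis unfolding kron_one nn .
  qed
  define K where "K = kron (1\<^sub>m L) (kron lt (1\<^sub>m N))"
  have Kc: "K \<in> carrier_mat n n"
    using kron_carrier'[OF one_carrier_mat kron_carrier'[OF ltc one_carrier_mat[of N]], of L] unfolding K_def nn .
  have Bq: "kron (1\<^sub>m L) (kron (cmat Q) A) = Bm * K"
  proof -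
    have "Bm * K = kron (1\<^sub>m L * 1\<^sub>m L) (kron qd A * kron lt (1\<^sub>m N))"
      unfolding K_def Bm_def
      by (rule kron_mult[OF one_carrier_mat one_carrier_mat kron_carrier'[OF qdc Ac] kron_carrier'[OF ltc one_carrier_mat]])
    also have "kron qd A * kron lt (1\<^sub>m N) = kron (qd * lt) (A * 1\<^sub>m N)" by (rule kron_mult[OF qdc ltc Ac one_carrier_mat])
    also have "A * 1\<^sub>m N = A" by (rule right_mult_one_mat[OF Ac])
    also have "1\<^sub>m L * 1\<^sub>m L = (1\<^sub>m L :: complex mat)" by (rule left_mult_one_mat[OF one_carrier_mat])
    finally show ?thesis unfolding cQ by (rule sym)
  qed
  define F where "F = kron (subdiag_E L) (kron (last_col_ones M) (1\<^sub>m N))"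
  have Ec: "subdiag_E L \<in> carrier_mat L L" unfolding subdiag_E_def by simp
  have NMc: "last_col_ones M \<in> carrier_mat M M" unfolding last_col_ones_def by simp
  have Fc: "F \<in> carrier_mat n n"
    using kron_carrier'[OF Ec kron_carrier'[OF NMc one_carrier_mat[of N]]] unfolding F_def nn .
  define nq where "nq = 1\<^sub>m M - lt"
  have nqc: "nq \<in> carrier_mat M M" unfolding nq_def by (rule minus_carrier_mat[OF ltc])
  define N0 where "N0 = 1\<^sub>m n - K"
  have N0c: "N0 \<in> carrier_mat n n" unfolding N0_def by (rule minus_carrier_mat[OF Kc])
  have N0k: "N0 = kron (1\<^sub>m L) (kron nq (1\<^sub>m N))"
  proof -
    have "kron (1\<^sub>m L) (kron nq (1\<^sub>m N)) = kron (1\<^sub>m L) (kron (1\<^sub>m M) (1\<^sub>m N) - kron lt (1\<^sub>m N))"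
      unfolding nq_def by (subst kron_minus_left[OF one_carrier_mat ltc]) (rule refl)
    also have "\<dots> = kron (1\<^sub>m L) (kron (1\<^sub>m M) (1\<^sub>m N)) - kron (1\<^sub>m L) (kron lt (1\<^sub>m N))"
      by (rule kron_minus_right[OF kron_carrier'[OF one_carrier_mat[of M] one_carrier_mat[of N]] kron_carrier'[OF ltc one_carrier_mat[of N]]])
    also have "\<dots> = N0" unfolding N0_def K_def kron_one nn ..
    finally show ?thesis by (rule sym)
  qed
  have nq_su: "\<And>i j. i < M \<Longrightarrow> j < M \<Longrightarrow> j \<le> i \<Longrightarrow> nq $$ (i,j) = 0"
  proof -
    fix i j assume ij: "i < M" "j < M" "j \<le> i"
    have "nq $$ (i,j) = (if i = j then 1 else 0) - complex_of_real (LQ $$ (j,i))"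
      unfolding nq_def lt_def cmat_def using ij LQc by simp
    then show "nq $$ (i,j) = 0" using ult ij LQc unfolding unit_lower_triangular_def
      by (cases "i = j") auto
  qed
  have N0pow: "N0 ^\<^sub>m k = 0\<^sub>m n n"
  proof -
    have "nq ^\<^sub>m k = 0\<^sub>m M M"
    proof (rule eq_matI)
      fix i j assume "i < dim_row (0\<^sub>m M M :: complex mat)" "j < dim_col (0\<^sub>m M M :: complex mat)"
      then have ij: "i < M" "j < M" by auto
      show "(nq ^\<^sub>m k) $$ (i,j) = 0\<^sub>m M M $$ (i,j)"
        using strict_upper_pow[OF nqc nq_su ij(1) ij(2), of k] ij kM by simp
    qed (use pow_carrier_mat[OF nqc, of k] in auto)
    then show ?thesis unfolding N0k kron_pow[OF nqc] using nn by (simp add: kron_zero kron_zero_left)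
  qed
  define a where "a = nrm N0"
  define b where "b = nrm Binv"
  define r0 where "r0 = nrm (K - 1\<^sub>m n + F)"
  have a0: "0 \<le> a" and b0: "0 \<le> b" and r00: "0 \<le> r0" unfolding a_def b_def r0_def by (auto intro: nrm_nonneg)
  obtain k' where k': "k = Suc k'" using kM M0 by (cases k) auto
  define cc where "cc = real k * (2 * b * r0) * (a + 1) ^ k' + 1"
  define ms where "ms = 2 * b + 2 + 2 * b * r0"
  have "0 \<le> real k * (2 * b * r0) * (a + 1) ^ k'" using a0 b0 r00 by simp
  then have cc0: "0 < cc" unfolding cc_def by linarith
  have br: "0 \<le> b * r0" using b0 r00 by simp
  have ms0: "0 < ms" unfolding ms_def using b0 br by linarith
  show "\<exists>\<mu>s > 0. \<exists>c > 0. \<forall>\<mu> > \<mu>s.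
           invertible_mat (precond_P L M N (transpose_mat UQ) A \<mu>) \<longrightarrow>
           spectral_radius (smoother_T L M N (coll_Q tau M) (transpose_mat UQ) A \<mu> k) \<le> c / \<mu>"
  proof (rule exI[of _ ms], intro conjI ms0, rule exI[of _ cc], intro conjI cc0 allI impI)
    fix \<mu> :: real assume mu: "ms < \<mu>" and invP: "invertible_mat (precond_P L M N (transpose_mat UQ) A \<mu>)"
    define P where "P = precond_P L M N (transpose_mat UQ) A \<mu>"
    have Pdef: "P = 1\<^sub>m n - complex_of_real \<mu> \<cdot>\<^sub>m Bm"
      unfolding P_def precond_P_def Bm_def qd_def QD_def n_def by simp
    have Pc: "P \<in> carrier_mat n n" unfolding Pdef by (rule minus_carrier_mat) (use Bmc in simp)
    define Pinv where "Pinv = the (mat_inverse P)"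
    have Pinv: "P * Pinv = 1\<^sub>m n" "Pinv * P = 1\<^sub>m n" "Pinv \<in> carrier_mat n n"
      using inv_from_invertible[OF Pc invP[folded P_def]] unfolding Pinv_def by auto
    define C where "C = composite_C L M N (coll_Q tau M) A \<mu>"
    have Cdef: "C = 1\<^sub>m n - complex_of_real \<mu> \<cdot>\<^sub>m (Bm * K) - F"
      unfolding C_def composite_C_def Bq[unfolded Q_def] F_def n_def by simp
    define T1 where "T1 = 1\<^sub>m n - Pinv * C"
    have T1eq: "T1 = N0 + Pinv * (K - 1\<^sub>m n + F)"
      unfolding T1_def Cdef N0_def by (rule alg_T1[OF Pc Pinv(3) Bmc Kc Fc Pinv(2) Pdef])
    have Rc: "Pinv * (K - 1\<^sub>m n + F) \<in> carrier_mat n n"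
      using Pinv(3) Kc Fc by (simp add: minus_carrier_mat)
    have T1c: "T1 \<in> carrier_mat n n" unfolding T1eq using Rc by simp
    have T1N: "T1 - N0 = Pinv * (K - 1\<^sub>m n + F)" unfolding T1eq by (rule add_sub_cancel_mat[OF N0c Rc])
    have mupos: "0 < \<mu>" using mu ms0 by simp
    have mu2: "2 * nrm Binv + 2 \<le> \<mu>" using mu br unfolding ms_def b_def by linarith
    have pb: "nrm Pinv \<le> 2 * b / \<mu>" unfolding b_def
      by (rule Pinv_bound[OF Pinv(3) Binvc alg_Pinv[OF Pc Pinv(3) Bmc Binvc Pinv(1) Pdef BiB] mu2])
    define r where "r = nrm (T1 - N0)"
    have r0': "0 \<le> r" unfolding r_def by (rule nrm_nonneg)
    have rb: "r \<le> 2 * b * r0 / \<mu>"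
    proof -
      have "r \<le> nrm Pinv * r0" unfolding r_def T1N r0_def
        by (rule nrm_mult[OF Pinv(3) add_carrier_mat[OF Fc]])
      also have "\<dots> \<le> (2 * b / \<mu>) * r0" by (rule mult_right_mono[OF pb r00])
      finally show ?thesis by simp
    qed
    have r1: "r \<le> 1"
    proof -
      have "2 * b * r0 \<le> \<mu>" using mu b0 br unfolding ms_def by linarith
      then have "2 * b * r0 / \<mu> \<le> 1" using mupos by simp
      then show ?thesis using rb by simp
    qed
    have "nrm (T1 ^\<^sub>m Suc k' - N0 ^\<^sub>m Suc k') \<le> real (Suc k') * r * (a + r) ^ k'"
      unfolding r_def a_def by (rule pow_perturb[OF T1c N0c])
    also have "T1 ^\<^sub>m Suc k' - N0 ^\<^sub>m Suc k' = T1 ^\<^sub>m k"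
      unfolding k'[symmetric] N0pow by (rule sub_zero_mat[OF pow_carrier_mat[OF T1c]])
    finally have h1: "nrm (T1 ^\<^sub>m k) \<le> real k * r * (a + r) ^ k'" using k' by simp
    also have "\<dots> \<le> real k * (2 * b * r0 / \<mu>) * (a + 1) ^ k'"
      using r0' r1 rb a0 b0 r00 mupos by (intro mult_mono power_mono) auto
    also have "\<dots> = (real k * (2 * b * r0) * (a + 1) ^ k') / \<mu>" by simp
    also have "\<dots> \<le> cc / \<mu>" unfolding cc_def using mupos by (intro divide_right_mono) auto
    finally have h2: "nrm (T1 ^\<^sub>m k) \<le> cc / \<mu>" .
    have "smoother_T L M N (coll_Q tau M) (transpose_mat UQ) A \<mu> k = T1 ^\<^sub>m k"
      unfolding smoother_T_def T1_def Pinv_def P_def C_def n_def by simp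
    moreover have "spectral_radius (T1 ^\<^sub>m k) \<le> nrm (T1 ^\<^sub>m k)"
      by (rule spec_le_nrm[OF pow_carrier_mat[OF T1c] n0])
    ultimately show "spectral_radius (smoother_T L M N (coll_Q tau M) (transpose_mat UQ) A \<mu> k) \<le> cc / \<mu>"
      using h2 by simp
  qed
qed

end
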